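(* Let $b\ge 3$ be an integer and $D \subset \{0,\ldots,b-1\}$ with $2 \le \#D \le b-1$. Let $n \geq 1$ and $p$ be integers and let $\psi(n)>0$ satisfy $\psi(n) < b^{-n}/2$. Put $d_{l,n} = \frac{m_{l}}{(b-1)b^n}$ and $d_{r,n} = \frac{m_{r}}{(b-1)b^n}$. Using the convention that an open ball with non-positive radius is the empty set: (1) If $p b^{-n} \in L_{n} \setminus R_{n}$, then $B\left(\frac{p}{b^{n}},\psi(n)\right) \cap C(b,D) = B\left(\frac{p}{b^{n}} + d_{l,n},\psi(n)-d_{l,n}\right) \cap C(b,D)$. (2) If $p b^{-n} \in R_{n} \setminus L_{n}$, then $B\left(\frac{p}{b^{n}},\psi(n)\right) \cap C(b,D) = B\left(\frac{p}{b^{n}} - d_{r,n},\psi(n)-d_{r,n}\right) \cap C(b,D)$. (3) If $p b^{-n} \in L_{n} \cup R_{n}$, then $B\left(\frac{p}{b^{n}},\psi(n)\right) \cap C(b,D) = \left(B\left(\frac{p}{b^{n}} + d_{l,n},\psi(n)-d_{l,n}\right) \cup B\left(\frac{p}{b^{n}} - d_{r,n},\psi(n)-d_{r,n}\right) \right) \cap C(b,D)$. (4) If $p b^{-n} \notin L_{n} \cup R_{n}$, then $B\left(\frac{p}{b^{n}},\psi(n)\right) \cap C(b,D) = \emptyset$.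
   Context: $C(b,D)$ is the set of $x\in[0,1]$ whose base-$b$ expansion uses only digits from $D$. $B(x,r)$ denotes the open interval $(x-r,x+r)$. The $n$-th level $C_n(b,D) = \{\sum_{i\ge1} x_i b^{-i} \in [0,1] : x_i \in D \text{ for } i=1,\ldots,n\}$ is a union of $(\#D)^n$ closed intervals of length $b^{-n}$; $L_n$ is the set of left endpoints and $R_n$ the set of right endpoints of these intervals (a point may lie in both). $m_l = \min D$ and $m_r = b-1-\max D$. *)

theory Defs
  imports "HOL-Analysis.Analysis"
begin

definition cantor_set :: "nat \<Rightarrow> nat set \<Rightarrow> real set" where
  "cantor_set b D = {x. 0 \<le> x \<and> x \<le> 1 \<and>
      (\<exists>d::nat \<Rightarrow> nat. (\<forall>i. d i \<in> D) \<and> x = (\<Sum>i. real (d i) / real b ^ Suc i))}"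

definition left_endpoints :: "nat \<Rightarrow> nat set \<Rightarrow> nat \<Rightarrow> real set" where
  "left_endpoints b D n =
     {(\<Sum>i<n. real (d i) / real b ^ Suc i) | d::nat \<Rightarrow> nat. \<forall>i<n. d i \<in> D}"

definition right_endpoints :: "nat \<Rightarrow> nat set \<Rightarrow> nat \<Rightarrow> real set" where
  "right_endpoints b D n =
     {(\<Sum>i<n. real (d i) / real b ^ Suc i) + 1 / real b ^ n | d::nat \<Rightarrow> nat. \<forall>i<n. d i \<in> D}"

definition m_l :: "nat set \<Rightarrow> real" where
  "m_l D = real (Min D)"

definition m_r :: "nat \<Rightarrow> nat set \<Rightarrow> real" where
  "m_r b D = real b - 1 - real (Max D)"

end

theory Submission imports Defs begin

lemma gsum:
  assumes "b \<ge> (2::nat)"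
  shows "(\<lambda>i. c / real b ^ Suc i) sums (c / (real b - 1))"
proof -
  have "(\<lambda>i. (1/real b)^i) sums (1/(1 - 1/real b))"
    by (rule geometric_sums) (use assms in simp)
  from sums_mult[OF this, of "c / real b"]
  have "(\<lambda>i. c / real b * (1/real b)^i) sums (c / real b * (1/(1 - 1/real b)))" .
  moreover have eqf: "(\<lambda>i. c / real b * (1/real b)^i) = (\<lambda>i. c / real b ^ Suc i)"
    by (rule ext) (simp add: power_one_over)
  moreover have eqv: "c / real b * (1/(1 - 1/real b)) = c / (real b - 1)"
    using assms by (simp add: field_simps)
  ultimately show ?thesis by (simp only: eqf eqv)
qed

lemma key:
  assumes b: "b \<ge> 3" "D \<subseteq> {0..b-1}" and y: "y \<in> cantor_set b D"
  obtains a k where "a \<in> left_endpoints b D n" "a + 1/real b^n \<in> right_endpoints b D n"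
    "a = real_of_int k / real b^n"
    "a + m_l D/((real b - 1)*real b^n) \<le> y"
    "y \<le> a + 1/real b^n - m_r b D/((real b - 1)*real b^n)"
proof -
  from y obtain e where e: "\<forall>i. e i \<in> D" and yeq: "y = (\<Sum>i. real (e i)/real b^Suc i)"
    unfolding cantor_set_def by blast
  define f where "f i = real (e i)/real b^Suc i" for i
  have fin: "finite D" using b(2) finite_subset by blast
  have eb: "e i \<le> b - 1" for i using e b(2) by auto
  have emin: "Min D \<le> e i" for i using e fin by auto
  have emax: "e i \<le> Max D" for i using e fin by auto
  have bpos: "real b > 1" using b by simp
  have s1: "summable (\<lambda>i. c / real b ^ Suc i)" for c
    using gsum[of b c] b sums_summable by auto
  have summ: "summable (\<lambda>i. real (e (i + m)) / real b ^ Suc i)" for m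
  proof (rule summable_comparison_test[OF _ s1[of "real (b-1)"]])
    show "\<exists>N. \<forall>na\<ge>N. norm (real (e (na + m)) / real b ^ Suc na) \<le> real (b - 1) / real b ^ Suc na"
      using eb by (auto intro!: divide_right_mono)
  qed
  have sf: "summable f" using summ[of 0] unfolding f_def by simp
  define a where "a = sum f {..<n}"
  define T where "T = (\<Sum>i. real (e (i + n)) / real b ^ Suc i)"
  have "(\<Sum>i. f (i + n)) = (\<Sum>i. real (e (i + n)) / real b ^ Suc i / real b ^ n)"
    unfolding f_def by (simp add: power_add field_simps)
  also have "\<dots> = T / real b ^ n" unfolding T_def by (rule suminf_divide[OF summ])
  finally have ysplit: "y = T / real b ^ n + a"
    using suminf_split_initial_segment[OF sf, of n] yeq unfolding a_def f_def by simp
  have T1: "real (Min D) / (real b - 1) \<le> T"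
  proof -
    have "real (Min D) / (real b - 1) = (\<Sum>i. real (Min D) / real b ^ Suc i)"
      using gsum[of b "real (Min D)"] b sums_unique by auto
    also have "\<dots> \<le> T" unfolding T_def
      by (rule suminf_le[OF _ s1 summ]) (use emin in \<open>auto intro!: divide_right_mono\<close>)
    finally show ?thesis .
  qed
  have T2: "T \<le> real (Max D) / (real b - 1)"
  proof -
    have "real (Max D) / (real b - 1) = (\<Sum>i. real (Max D) / real b ^ Suc i)"
      using gsum[of b "real (Max D)"] b sums_unique by auto
    moreover have "T \<le> (\<Sum>i. real (Max D) / real b ^ Suc i)" unfolding T_def
      by (rule suminf_le[OF _ summ s1]) (use emax in \<open>auto intro!: divide_right_mono\<close>)
    ultimately show ?thesis by simp
  qed
  define k where "k = (\<Sum>i<n. int (e i) * int b ^ (n - Suc i))"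
  have "a * real b ^ n = (\<Sum>i<n. real (e i) * real b ^ (n - Suc i))"
    unfolding a_def f_def sum_distrib_right
  proof (rule sum.cong)
    fix i assume "i \<in> {..<n}"
    then have "Suc i + (n - Suc i) = n" by simp
    then have "real b ^ n = real b ^ Suc i * real b ^ (n - Suc i)"
      by (metis power_add)
    then show "real (e i) / real b ^ Suc i * real b ^ n = real (e i) * real b ^ (n - Suc i)"
      using bpos by (simp add: field_simps)
  qed simp
  also have "\<dots> = real_of_int k" unfolding k_def by simp
  finally have ak: "a = real_of_int k / real b ^ n" using bpos by (simp add: field_simps)
  show ?thesis
  proof (rule that[of a k])
    show "a \<in> left_endpoints b D n" unfolding left_endpoints_def a_def f_def using e by blast
    show "a + 1/real b^n \<in> right_endpoints b D n" unfolding right_endpoints_def a_def f_def using e by blast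
    show "a = real_of_int k / real b^n" by (rule ak)
    show "a + m_l D/((real b - 1)*real b^n) \<le> y"
    proof -
      have "m_l D/((real b - 1)*real b^n) = (real (Min D)/(real b - 1))/real b^n"
        unfolding m_l_def by simp
      also have "\<dots> \<le> T / real b^n" using T1 bpos by (intro divide_right_mono) auto
      finally show ?thesis using ysplit by simp
    qed
    have "Max D \<le> b - 1" using b(2) fin e by (metis Max_in atLeastAtMost_iff empty_iff subsetD)
    then show "y \<le> a + 1/real b^n - m_r b D/((real b - 1)*real b^n)"
    proof -
      have "1/real b^n - m_r b D/((real b - 1)*real b^n) = (real (Max D)/(real b - 1))/real b^n"
        unfolding m_r_def using bpos \<open>Max D \<le> b - 1\<close> by (simp add: field_simps of_nat_diff)
      moreover have "T / real b^n \<le> (real (Max D)/(real b - 1))/real b^n"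
        using T2 bpos by (intro divide_right_mono) auto
      ultimately show ?thesis using ysplit by simp
    qed
  qed
qed
theorem lemma3p2:
  fixes b :: nat and D :: "nat set" and n :: nat and p :: int and psi :: real
  assumes "b \<ge> 3"
    and "D \<subseteq> {0..b-1}"
    and "2 \<le> card D" and "card D \<le> b - 1"
    and "n \<ge> 1"
    and "psi > 0" and "psi < (1 / real b ^ n) / 2"
  defines "x \<equiv> real_of_int p / real b ^ n"
    and "dl \<equiv> m_l D / ((real b - 1) * real b ^ n)"
    and "dr \<equiv> m_r b D / ((real b - 1) * real b ^ n)"
  shows
    "(x \<in> left_endpoints b D n - right_endpoints b D n \<longrightarrow>
        ball x psi \<inter> cantor_set b D = ball (x + dl) (psi - dl) \<inter> cantor_set b D)
   \<and> (x \<in> right_endpoints b D n - left_endpoints b D n \<longrightarrow>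
        ball x psi \<inter> cantor_set b D = ball (x - dr) (psi - dr) \<inter> cantor_set b D)
   \<and> (x \<in> left_endpoints b D n \<union> right_endpoints b D n \<longrightarrow>
        ball x psi \<inter> cantor_set b D
          = (ball (x + dl) (psi - dl) \<union> ball (x - dr) (psi - dr)) \<inter> cantor_set b D)
   \<and> (x \<notin> left_endpoints b D n \<union> right_endpoints b D n \<longrightarrow>
        ball x psi \<inter> cantor_set b D = {})"
proof -
  have bpos: "real b > 1" using assms(1) by simp
  define B where "B = real b ^ n"
  have Bpos: "B > 0" unfolding B_def using bpos by simp
  have fin: "finite D" using assms(2) finite_subset by blast
  have Dne: "D \<noteq> {}" using assms(3) by auto
  have "Max D \<le> b - 1" using assms(2) fin Dne by (metis Max_in atLeastAtMost_iff subsetD)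
  then have mr0: "m_r b D \<ge> 0" unfolding m_r_def using bpos by (simp add: of_nat_diff)
  have dl0: "dl \<ge> 0" unfolding dl_def m_l_def using bpos by simp
  have dr0: "dr \<ge> 0" unfolding dr_def using bpos mr0 by simp
  have core: "(x \<in> left_endpoints b D n \<and> x + dl \<le> y) \<or> (x \<in> right_endpoints b D n \<and> y \<le> x - dr)"
    if y: "y \<in> cantor_set b D" "dist x y < psi" for y
  proof -
    obtain a k where a: "a \<in> left_endpoints b D n" "a + 1/real b^n \<in> right_endpoints b D n"
      "a = real_of_int k / real b^n"
      "a + m_l D/((real b - 1)*real b^n) \<le> y"
      "y \<le> a + 1/real b^n - m_r b D/((real b - 1)*real b^n)"
      using key[OF assms(1,2) y(1)] by blast
    have a4: "a + dl \<le> y" and a5: "y \<le> a + 1/B - dr" using a(4,5) unfolding dl_def dr_def B_def by auto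
    have ak: "a * B = real_of_int k" using a(3) Bpos unfolding B_def by simp
    have xp: "x * B = real_of_int p" using Bpos unfolding x_def B_def by simp
    have "a * B \<le> y * B" using a4 dl0 Bpos by (intro mult_right_mono) auto
    then have k1: "real_of_int k \<le> y * B" using ak by simp
    have "y * B \<le> (a + 1/B) * B" using a5 dr0 Bpos by (intro mult_right_mono) auto
    then have k2: "y * B \<le> real_of_int k + 1" using ak Bpos by (simp add: distrib_right)
    have "\<bar>x - y\<bar> * B < (1/B/2) * B" using y(2) assms(7) Bpos unfolding dist_real_def B_def
      by (intro mult_strict_right_mono) auto
    then have k3: "\<bar>x * B - y * B\<bar> < 1/2" using Bpos by (simp add: abs_mult flip: left_diff_distrib)
    have "real_of_int p > real_of_int k - 1" "real_of_int p < real_of_int k + 2"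
      using k1 k2 k3 xp by linarith+
    then have "p > k - 1" "p < k + 2" by linarith+
    then have "p = k \<or> p = k + 1" by linarith
    then show ?thesis
    proof
      assume "p = k"
      then have "x = a" using a(3) unfolding x_def by simp
      then show ?thesis using a a4 by auto
    next
      assume "p = k + 1"
      then have "x = a + 1/B" using a(3) Bpos unfolding x_def B_def by (simp add: field_simps)
      then show ?thesis using a a5 unfolding B_def by auto
    qed
  qed
  have sub1: "ball (x + dl) (psi - dl) \<subseteq> ball x psi"
    using dl0 by (auto simp: dist_real_def)
  have sub2: "ball (x - dr) (psi - dr) \<subseteq> ball x psi"
    using dr0 by (auto simp: dist_real_def)
  show ?thesis
  proof (intro conjI impI)
    assume h: "x \<in> left_endpoints b D n - right_endpoints b D n"
    show "ball x psi \<inter> cantor_set b D = ball (x + dl) (psi - dl) \<inter> cantor_set b D"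
    proof
      show "ball x psi \<inter> cantor_set b D \<subseteq> ball (x + dl) (psi - dl) \<inter> cantor_set b D"
      proof
        fix y assume "y \<in> ball x psi \<inter> cantor_set b D"
        then have "y \<in> cantor_set b D" "dist x y < psi" by auto
        with core h have "x + dl \<le> y" by blast
        then show "y \<in> ball (x + dl) (psi - dl) \<inter> cantor_set b D"
          using \<open>y \<in> cantor_set b D\<close> \<open>dist x y < psi\<close> by (auto simp: dist_real_def)
      qed
    qed (use sub1 in blast)
  next
    assume h: "x \<in> right_endpoints b D n - left_endpoints b D n"
    show "ball x psi \<inter> cantor_set b D = ball (x - dr) (psi - dr) \<inter> cantor_set b D"
    proof
      show "ball x psi \<inter> cantor_set b D \<subseteq> ball (x - dr) (psi - dr) \<inter> cantor_set b D"
      proof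
        fix y assume "y \<in> ball x psi \<inter> cantor_set b D"
        then have "y \<in> cantor_set b D" "dist x y < psi" by auto
        with core h have "y \<le> x - dr" by blast
        then show "y \<in> ball (x - dr) (psi - dr) \<inter> cantor_set b D"
          using \<open>y \<in> cantor_set b D\<close> \<open>dist x y < psi\<close> by (auto simp: dist_real_def)
      qed
    qed (use sub2 in blast)
  next
    show "ball x psi \<inter> cantor_set b D
          = (ball (x + dl) (psi - dl) \<union> ball (x - dr) (psi - dr)) \<inter> cantor_set b D"
    proof
      show "ball x psi \<inter> cantor_set b D \<subseteq> (ball (x + dl) (psi - dl) \<union> ball (x - dr) (psi - dr)) \<inter> cantor_set b D"
      proof
        fix y assume "y \<in> ball x psi \<inter> cantor_set b D"
        then have "y \<in> cantor_set b D" "dist x y < psi" by auto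
        with core have "x + dl \<le> y \<or> y \<le> x - dr" by blast
        then show "y \<in> (ball (x + dl) (psi - dl) \<union> ball (x - dr) (psi - dr)) \<inter> cantor_set b D"
          using \<open>y \<in> cantor_set b D\<close> \<open>dist x y < psi\<close> by (auto simp: dist_real_def)
      qed
    qed (use sub1 sub2 in blast)
  next
    assume h: "x \<notin> left_endpoints b D n \<union> right_endpoints b D n"
    show "ball x psi \<inter> cantor_set b D = {}"
      using core h by auto
  qed
qed

end
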